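(* Let $\mathcal{L}$ be a propositional language and let $\mathcal{L}_1$ be an expansion of $\mathcal{L}$, with induced quantale embedding $i:\wp\Sigma_{\mathcal{L}}\to\wp\Sigma_{\mathcal{L}_1}$. Let $(D,\vdash)$ be a deductive system over $\mathcal{L}$ with associated nucleus $\gamma$ and $\wp\Sigma_{\mathcal{L}}$-module of theories $\mathrm{Th}$. Then $\mathrm{Th}$ is isomorphic to a $\wp\Sigma_{\mathcal{L}}$-submodule of $(\wp\Sigma_{\mathcal{L}_1}\otimes_{\wp\Sigma_{\mathcal{L}}}\mathrm{Th})_i$.
   Context: A quantale is a complete lattice $Q$ with a monoid structure $(Q,\cdot,1)$ whose product distributes over arbitrary joins on both sides. A left $Q$-module is a complete lattice $M$ with an action $Q\times M\to M$ that is associative, unital, and distributes over arbitrary joins in both arguments (right modules analogously); module homomorphisms preserve arbitrary joins and the action. A $Q$-module nucleus on $M$ is a closure operator $\gamma$ on $M$ with $a\gamma(u)\le\gamma(au)$; its image $M_\gamma$ is a $Q$-module with joins $\gamma(\bigvee\cdot)$ and action $a\cdot_\gamma u=\gamma(au)$. A propositional language $\mathcal{L}$ is a set of connectives with arities; fix a denumerable set $\mathrm{Var}$ of variables; $\mathit{Fm}_{\mathcal{L}}$ is the absolutely free $\mathcal{L}$-algebra over $\mathrm{Var}$, and $\Sigma_{\mathcal{L}}$ is the monoid (under composition) of its endomorphisms (substitutions). $\wp\Sigma_{\mathcal{L}}$ is the quantale of subsets of $\Sigma_{\mathcal{L}}$ with union as join, product $\Sigma\Sigma'=\{\sigma\sigma'\}$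 and unit $\{\mathrm{id}\}$. The domain $D$ of a deductive system is either $\mathit{Fm}_{\mathcal{L}}$, or $\mathit{Eq}=\mathit{Fm}_{\mathcal{L}}^2$, or $\mathit{Seq}_T=\bigcup_{(m,n)\in T}\mathit{Fm}_{\mathcal{L}}^m\times\mathit{Fm}_{\mathcal{L}}^n$ for some $T\subseteq\omega^2$; $\wp D$ is a left $\wp\Sigma_{\mathcal{L}}$-module with union as join and $\Sigma\cdot\Phi=\{\sigma(\varphi):\sigma\in\Sigma,\varphi\in\Phi\}$ (substitutions acting componentwise). A (structural) consequence relation $\vdash$ on $D$ (given by axioms and inference rules) corresponds to the $\wp\Sigma_{\mathcal{L}}$-module nucleus $\gamma(\Phi)=\{\psi:\Phi\vdash\psi\}$ on $\wp D$; its module of theories is $\mathrm{Th}=(\wp D)_\gamma$. An expansion $\mathcal{L}_1$ of $\mathcal{L}$ is a language containing all connectives of $\mathcal{L}$ with the same arities; $i$ sends $\Sigma\subseteq\Sigma_{\mathcal{L}}$ to the set of the unique $\mathcal{L}_1$-substitutions agreeing on $\mathrm{Var}$ with the elements of $\Sigma$. Via $i$, $\wp\Sigma_{\mathcal{L}_1}$ is a right $\wp\Sigma_{\mathcal{L}}$-module ($\Omega\cdot\Sigma=\Omega\, i(\Sigma)$). For a right $Q$-module $M_1$ and left $Q$-module $M_2$, the tensor product $M_1\otimes_Q M_2$ is the quotient of the free sup-lattice $\wp(M_1\times M_2)$ by the sup-lattice congruence generated by the pairs $(\{(\bigvee X,y)\},\bigcup_{x\in X}\{(x,y)\})$, $(\{(x,\bigvee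 Y)\},\bigcup_{y\in Y}\{(x,y)\})$, $(\{(xa,y)\},\{(x,ay)\})$; here $\wp\Sigma_{\mathcal{L}_1}\otimes_{\wp\Sigma_{\mathcal{L}}}\mathrm{Th}$ is a left $\wp\Sigma_{\mathcal{L}_1}$-module via left multiplication on the first factor. For a $\wp\Sigma_{\mathcal{L}_1}$-module $N$, $(N)_i$ denotes the $\wp\Sigma_{\mathcal{L}}$-module with the same sup-lattice and action $\Sigma\cdot u=i(\Sigma)u$. *)

theory Defs
  imports Main
begin

text \<open>Connective symbols live in a type 'c, each with a fixed arity given by ar.
  A language is a set L of connective symbols (with the arities ar).\<close>

datatype 'c fm = Var nat | Op 'c "'c fm list"

fun wf_fm :: "('c \<Rightarrow> nat) \<Rightarrow> 'c set \<Rightarrow> 'c fm \<Rightarrow> bool" where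
  "wf_fm ar L (Var v) = True"
| "wf_fm ar L (Op c xs) = (c \<in> L \<and> length xs = ar c \<and> (\<forall>x\<in>set xs. wf_fm ar L x))"

definition Fm :: "('c \<Rightarrow> nat) \<Rightarrow> 'c set \<Rightarrow> 'c fm set" where
  "Fm ar L = {x. wf_fm ar L x}"

text \<open>An expansion L1 of L: contains all connectives of L with the same arities.\<close>
definition expansion :: "'c set \<Rightarrow> 'c set \<Rightarrow> bool" where
  "expansion L L1 \<longleftrightarrow> L \<subseteq> L1"

text \<open>An endomorphism of Fm_L is uniquely determined by its values on the variables;
  we represent it by that variable assignment s, acting via subst s.\<close>

fun subst :: "(nat \<Rightarrow> 'c fm) \<Rightarrow> 'c fm \<Rightarrow> 'c fm" where
  "subst s (Var v) = s v"
| "subst s (Op c xs) = Op c (map (subst s) xs)"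

definition Sig :: "('c \<Rightarrow> nat) \<Rightarrow> 'c set \<Rightarrow> (nat \<Rightarrow> 'c fm) set" where
  "Sig ar L = {s. \<forall>v. s v \<in> Fm ar L}"

text \<open>Composition sigma sigma' (first sigma', then sigma).\<close>
definition scomp :: "(nat \<Rightarrow> 'c fm) \<Rightarrow> (nat \<Rightarrow> 'c fm) \<Rightarrow> (nat \<Rightarrow> 'c fm)" where
  "scomp s t = (\<lambda>v. subst s (t v))"

definition sprod :: "(nat \<Rightarrow> 'c fm) set \<Rightarrow> (nat \<Rightarrow> 'c fm) set \<Rightarrow> (nat \<Rightarrow> 'c fm) set" where
  "sprod A B = {scomp s t | s t. s \<in> A \<and> t \<in> B}"

definition iemb :: "('c \<Rightarrow> nat) \<Rightarrow> 'c set \<Rightarrow> (nat \<Rightarrow> 'c fm) set \<Rightarrow> (nat \<Rightarrow> 'c fm) set" where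
  "iemb ar L1 A = {t \<in> Sig ar L1. \<exists>s\<in>A. \<forall>v. t v = s v}"

datatype 'c delt = DF "'c fm" | DE "'c fm" "'c fm" | DS "'c fm list" "'c fm list"

text \<open>Kind of domain: formulas, equations, or sequents of types in T.\<close>
datatype dkind = KFm | KEq | KSeq "(nat \<times> nat) set"

fun Dom :: "('c \<Rightarrow> nat) \<Rightarrow> 'c set \<Rightarrow> dkind \<Rightarrow> 'c delt set" where
  "Dom ar L KFm = DF ` Fm ar L"
| "Dom ar L KEq = {DE a b | a b. a \<in> Fm ar L \<and> b \<in> Fm ar L}"
| "Dom ar L (KSeq T) = {DS xs ys | xs ys. (length xs, length ys) \<in> T
                         \<and> set xs \<subseteq> Fm ar L \<and> set ys \<subseteq> Fm ar L}"

fun app :: "(nat \<Rightarrow> 'c fm) \<Rightarrow> 'c delt \<Rightarrow> 'c delt" where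
  "app s (DF a) = DF (subst s a)"
| "app s (DE a b) = DE (subst s a) (subst s b)"
| "app s (DS xs ys) = DS (map (subst s) xs) (map (subst s) ys)"

definition sact :: "(nat \<Rightarrow> 'c fm) set \<Rightarrow> 'c delt set \<Rightarrow> 'c delt set" where
  "sact A Phi = {app s d | s d. s \<in> A \<and> d \<in> Phi}"

definition conseq_rel :: "('c \<Rightarrow> nat) \<Rightarrow> 'c set \<Rightarrow> dkind \<Rightarrow> ('c delt set \<Rightarrow> 'c delt \<Rightarrow> bool) \<Rightarrow> bool" where
  "conseq_rel ar L K der \<longleftrightarrow>
     (\<forall>Phi psi. der Phi psi \<longrightarrow> Phi \<subseteq> Dom ar L K \<and> psi \<in> Dom ar L K) \<and>
     (\<forall>Phi phi. Phi \<subseteq> Dom ar L K \<and> phi \<in> Phi \<longrightarrow> der Phi phi) \<and>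
     (\<forall>Phi Psi phi. der Phi phi \<and> Phi \<subseteq> Psi \<and> Psi \<subseteq> Dom ar L K \<longrightarrow> der Psi phi) \<and>
     (\<forall>Phi Psi chi. Phi \<subseteq> Dom ar L K \<and> (\<forall>psi\<in>Psi. der Phi psi) \<and> der Psi chi \<longrightarrow> der Phi chi) \<and>
     (\<forall>Phi phi s. der Phi phi \<and> s \<in> Sig ar L \<longrightarrow> der (app s ` Phi) (app s phi))"

definition gamma :: "('c delt set \<Rightarrow> 'c delt \<Rightarrow> bool) \<Rightarrow> 'c delt set \<Rightarrow> 'c delt set" where
  "gamma der Phi = {psi. der Phi psi}"

definition Th :: "('c \<Rightarrow> nat) \<Rightarrow> 'c set \<Rightarrow> dkind \<Rightarrow> ('c delt set \<Rightarrow> 'c delt \<Rightarrow> bool) \<Rightarrow> 'c delt set set" where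
  "Th ar L K der = {Phi. Phi \<subseteq> Dom ar L K \<and> gamma der Phi = Phi}"

definition ThJoin :: "('c delt set \<Rightarrow> 'c delt \<Rightarrow> bool) \<Rightarrow> 'c delt set set \<Rightarrow> 'c delt set" where
  "ThJoin der X = gamma der (\<Union>X)"

definition ThAct :: "('c delt set \<Rightarrow> 'c delt \<Rightarrow> bool) \<Rightarrow> (nat \<Rightarrow> 'c fm) set \<Rightarrow> 'c delt set \<Rightarrow> 'c delt set" where
  "ThAct der A Phi = gamma der (sact A Phi)"

text \<open>Generating pairs of the sup-lattice congruence on the free sup-lattice P(M1 x M2).
  Q: quantale elements; (C1, J1, R1): right module; (C2, J2, A2): left module.\<close>
definition tgen :: "'q set \<Rightarrow> 'a set \<Rightarrow> ('a set \<Rightarrow> 'a) \<Rightarrow> ('a \<Rightarrow> 'q \<Rightarrow> 'a)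
                   \<Rightarrow> 'b set \<Rightarrow> ('b set \<Rightarrow> 'b) \<Rightarrow> ('q \<Rightarrow> 'b \<Rightarrow> 'b)
                   \<Rightarrow> (('a \<times> 'b) set \<times> ('a \<times> 'b) set) set" where
  "tgen Q C1 J1 R1 C2 J2 A2 =
     {({(J1 X, y)}, (\<Union>x\<in>X. {(x, y)})) | X y. X \<subseteq> C1 \<and> y \<in> C2}
   \<union> {({(x, J2 Y)}, (\<Union>y\<in>Y. {(x, y)})) | x Y. x \<in> C1 \<and> Y \<subseteq> C2}
   \<union> {({(R1 x a, y)}, {(x, A2 a y)}) | x a y. x \<in> C1 \<and> a \<in> Q \<and> y \<in> C2}"

inductive tcong :: "'x set \<Rightarrow> ('x set \<times> 'x set) set \<Rightarrow> 'x set \<Rightarrow> 'x set \<Rightarrow> bool"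
  for U G where
  refl: "X \<subseteq> U \<Longrightarrow> tcong U G X X"
| gen: "(X, Y) \<in> G \<Longrightarrow> tcong U G X Y"
| sym: "tcong U G X Y \<Longrightarrow> tcong U G Y X"
| trans: "tcong U G X Y \<Longrightarrow> tcong U G Y Z \<Longrightarrow> tcong U G X Z"
| union: "\<forall>p\<in>P. tcong U G (fst p) (snd p) \<Longrightarrow> tcong U G (\<Union>(fst ` P)) (\<Union>(snd ` P))"

definition tcls :: "'x set \<Rightarrow> ('x set \<times> 'x set) set \<Rightarrow> 'x set \<Rightarrow> 'x set set" where
  "tcls U G X = {Y. tcong U G X Y}"

definition tcarrier :: "'x set \<Rightarrow> ('x set \<times> 'x set) set \<Rightarrow> 'x set set set" where
  "tcarrier U G = Pow U // {(X, Y). tcong U G X Y}"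

definition tjoin :: "'x set \<Rightarrow> ('x set \<times> 'x set) set \<Rightarrow> 'x set set set \<Rightarrow> 'x set set" where
  "tjoin U G CC = tcls U G (\<Union>C\<in>CC. (SOME X. X \<in> C))"

definition tact1 :: "'a set \<Rightarrow> ('a \<times> 'b) set \<Rightarrow> (('a \<times> 'b) set \<times> ('a \<times> 'b) set) set \<Rightarrow> ('a \<Rightarrow> 'a)
                    \<Rightarrow> ('a \<times> 'b) set set \<Rightarrow> ('a \<times> 'b) set set" where
  "tact1 C1 U G f u = tcls U G ((\<lambda>(x, y). (f x, y)) ` (SOME X. X \<in> u))"

definition TU :: "('c \<Rightarrow> nat) \<Rightarrow> 'c set \<Rightarrow> 'c set \<Rightarrow> dkind \<Rightarrow> ('c delt set \<Rightarrow> 'c delt \<Rightarrow> bool)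
                  \<Rightarrow> ((nat \<Rightarrow> 'c fm) set \<times> 'c delt set) set" where
  "TU ar L L1 K der = Pow (Sig ar L1) \<times> Th ar L K der"

definition TG :: "('c \<Rightarrow> nat) \<Rightarrow> 'c set \<Rightarrow> 'c set \<Rightarrow> dkind \<Rightarrow> ('c delt set \<Rightarrow> 'c delt \<Rightarrow> bool)
                  \<Rightarrow> (((nat \<Rightarrow> 'c fm) set \<times> 'c delt set) set \<times> ((nat \<Rightarrow> 'c fm) set \<times> 'c delt set) set) set" where
  "TG ar L L1 K der =
     tgen (Pow (Sig ar L)) (Pow (Sig ar L1)) Union (\<lambda>x a. sprod x (iemb ar L1 a))
          (Th ar L K der) (ThJoin der) (ThAct der)"

definition Tcar where
  "Tcar ar L L1 K der = tcarrier (TU ar L L1 K der) (TG ar L L1 K der)"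

definition Tjoin where
  "Tjoin ar L L1 K der = tjoin (TU ar L L1 K der) (TG ar L L1 K der)"

definition Tact_i where
  "Tact_i ar L L1 K der a u =
     tact1 (Pow (Sig ar L1)) (TU ar L L1 K der) (TG ar L L1 K der) (\<lambda>x. sprod (iemb ar L1 a) x) u"

definition iso_to_submodule :: "'q set \<Rightarrow> 'm set \<Rightarrow> ('m set \<Rightarrow> 'm) \<Rightarrow> ('q \<Rightarrow> 'm \<Rightarrow> 'm)
                              \<Rightarrow> 'n set \<Rightarrow> ('n set \<Rightarrow> 'n) \<Rightarrow> ('q \<Rightarrow> 'n \<Rightarrow> 'n) \<Rightarrow> bool" where
  "iso_to_submodule Q C1 J1 A1 C2 J2 A2 \<longleftrightarrow>
    (\<exists>S f. S \<subseteq> C2 \<and> (\<forall>X\<subseteq>S. J2 X \<in> S) \<and> (\<forall>a\<in>Q. \<forall>u\<in>S. A2 a u \<in> S)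
         \<and> bij_betw f C1 S
         \<and> (\<forall>X\<subseteq>C1. f (J1 X) = J2 (f ` X))
         \<and> (\<forall>a\<in>Q. \<forall>u\<in>C1. f (A1 a u) = A2 a (f u)))"

end

theory Submission
  imports Defs
begin

lemma subst_Var: "subst Var x = x"
  by (induction x) (auto intro: map_idI)
lemma subst_subst: "subst s (subst t x) = subst (scomp s t) x"
  by (induction x) (auto simp: scomp_def)
lemma app_app: "app s (app t d) = app (scomp s t) d"
  by (cases d) (auto simp: subst_subst)
lemma app_Var: "app Var d = d"
  by (cases d) (auto simp: subst_Var map_idI)
lemma subst_Fm: "s \<in> Sig ar L \<Longrightarrow> x \<in> Fm ar L \<Longrightarrow> subst s x \<in> Fm ar L"
  by (induction x) (auto simp: Fm_def Sig_def)
lemma app_Dom: "s \<in> Sig ar L \<Longrightarrow> d \<in> Dom ar L K \<Longrightarrow> app s d \<in> Dom ar L K"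
  by (cases K) (auto simp: subst_Fm subsetD)
lemma Var_Sig: "Var \<in> Sig ar L" by (simp add: Sig_def Fm_def)
lemma scomp_Sig: "s \<in> Sig ar L \<Longrightarrow> t \<in> Sig ar L \<Longrightarrow> scomp s t \<in> Sig ar L"
  by (auto simp: Sig_def scomp_def subst_Fm)
lemma wf_mono: "L \<subseteq> L1 \<Longrightarrow> wf_fm ar L x \<Longrightarrow> wf_fm ar L1 x"
  by (induction x) auto
lemma Sig_mono: "L \<subseteq> L1 \<Longrightarrow> Sig ar L \<subseteq> Sig ar L1"
  by (auto simp: Sig_def Fm_def intro: wf_mono)
lemma iemb_id: "L \<subseteq> L1 \<Longrightarrow> a \<subseteq> Sig ar L \<Longrightarrow> iemb ar L1 a = a"
proof -
  assume "L \<subseteq> L1" "a \<subseteq> Sig ar L"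
  then show ?thesis using Sig_mono[of L L1 ar] unfolding iemb_def
    by (auto simp: fun_eq_iff) (metis ext)
qed
lemma sprod_Var_left: "sprod {Var} A = A"
  by (auto simp: sprod_def scomp_def subst_Var)
lemma sprod_Var_right: "sprod A {Var} = A"
  by (auto simp: sprod_def scomp_def)
lemma scomp_assoc: "scomp a (scomp b c) = scomp (scomp a b) c"
  by (auto simp: scomp_def subst_subst fun_eq_iff)
lemma sprod_assoc: "sprod a (sprod b c) = sprod (sprod a b) c"
  unfolding sprod_def by (auto simp: scomp_assoc) (metis scomp_assoc)+
lemma sprod_Union: "sprod a (\<Union>X) = \<Union>(sprod a ` X)"
  unfolding sprod_def by blast
lemma sprod_Sig: "a \<subseteq> Sig ar L \<Longrightarrow> b \<subseteq> Sig ar L \<Longrightarrow> sprod a b \<subseteq> Sig ar L"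
  unfolding sprod_def by (auto intro: scomp_Sig)
lemma sact_sact: "sact A (sact B Phi) = sact (sprod A B) Phi"
  unfolding sact_def sprod_def by (auto simp: app_app) (metis app_app)+
lemma sact_Union_left: "sact (\<Union>X) Phi = (\<Union>x\<in>X. sact x Phi)"
  unfolding sact_def by blast
lemma sact_Union_right: "sact a (\<Union>Y) = (\<Union>y\<in>Y. sact a y)"
  unfolding sact_def by blast
lemma sact_Var: "sact {Var} Phi = Phi"
  unfolding sact_def by (auto simp: app_Var)
lemma sact_mono: "Phi \<subseteq> Psi \<Longrightarrow> sact a Phi \<subseteq> sact a Psi"
  unfolding sact_def by blast

fun pr :: "('c \<Rightarrow> nat) \<Rightarrow> 'c set \<Rightarrow> 'c fm \<Rightarrow> 'c fm" where
  "pr ar L (Var v) = Var v"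
| "pr ar L (Op c xs) = (if c \<in> L \<and> length xs = ar c then Op c (map (pr ar L) xs) else Var 0)"

lemma pr_Fm: "pr ar L x \<in> Fm ar L"
  by (induction x) (auto simp: Fm_def)
lemma pr_subst: "x \<in> Fm ar L \<Longrightarrow> pr ar L (subst w x) = subst (pr ar L \<circ> w) x"
  by (induction x) (auto simp: Fm_def)

definition prS where "prS ar L A = (\<lambda>w. pr ar L \<circ> w) ` A"

lemma prS_Sig: "prS ar L A \<subseteq> Sig ar L"
  by (auto simp: prS_def Sig_def pr_Fm)
lemma prS_Var: "prS ar L {Var} = {Var}"
  by (auto simp: prS_def fun_eq_iff)
lemma prS_Union: "prS ar L (\<Union>X) = (\<Union>x\<in>X. prS ar L x)"
  by (auto simp: prS_def)
lemma prS_sprod: "a \<subseteq> Sig ar L \<Longrightarrow> prS ar L (sprod x a) = sprod (prS ar L x) a"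
proof -
  assume a: "a \<subseteq> Sig ar L"
  have e: "pr ar L \<circ> scomp w s = scomp (pr ar L \<circ> w) s" if "s \<in> a" for w s
    using a that by (auto simp: fun_eq_iff scomp_def Sig_def pr_subst)
  show ?thesis unfolding prS_def sprod_def
    using e by (auto simp: image_def) (metis e)+
qed

context
  fixes ar :: "'c \<Rightarrow> nat" and L L1 :: "'c set" and K :: dkind
    and der :: "'c delt set \<Rightarrow> 'c delt \<Rightarrow> bool"
  assumes exL: "L \<subseteq> L1" and cr: "conseq_rel ar L K der"
begin

lemma cr1: "der Phi psi \<Longrightarrow> Phi \<subseteq> Dom ar L K \<and> psi \<in> Dom ar L K"
proof -
  have h: "\<forall>Phi psi. der Phi psi \<longrightarrow> Phi \<subseteq> Dom ar L K \<and> psi \<in> Dom ar L K"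
    using cr unfolding conseq_rel_def by (elim conjE) assumption
  assume a: "der Phi psi" show ?thesis using spec[OF spec[OF h, of Phi], of psi] a by blast
qed
lemma cr2: "Phi \<subseteq> Dom ar L K \<Longrightarrow> phi \<in> Phi \<Longrightarrow> der Phi phi"
proof -
  have h: "\<forall>Phi phi. Phi \<subseteq> Dom ar L K \<and> phi \<in> Phi \<longrightarrow> der Phi phi"
    using cr unfolding conseq_rel_def by (elim conjE) assumption
  assume a: "Phi \<subseteq> Dom ar L K" "phi \<in> Phi" show ?thesis using spec[OF spec[OF h, of Phi], of phi] a by blast
qed
lemma cr3: "der Phi phi \<Longrightarrow> Phi \<subseteq> Psi \<Longrightarrow> Psi \<subseteq> Dom ar L K \<Longrightarrow> der Psi phi"
proof -
  have h: "\<forall>Phi Psi phi. der Phi phi \<and> Phi \<subseteq> Psi \<and> Psi \<subseteq> Dom ar L K \<longrightarrow> der Psi phi"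
    using cr unfolding conseq_rel_def by (elim conjE) assumption
  assume a: "der Phi phi" "Phi \<subseteq> Psi" "Psi \<subseteq> Dom ar L K" show ?thesis using spec[OF spec[OF spec[OF h, of Phi], of Psi], of phi] a by blast
qed
lemma cr4: "Phi \<subseteq> Dom ar L K \<Longrightarrow> (\<forall>psi\<in>Psi. der Phi psi) \<Longrightarrow> der Psi chi \<Longrightarrow> der Phi chi"
proof -
  have h: "\<forall>Phi Psi chi. Phi \<subseteq> Dom ar L K \<and> (\<forall>psi\<in>Psi. der Phi psi) \<and> der Psi chi \<longrightarrow> der Phi chi"
    using cr unfolding conseq_rel_def by (elim conjE) assumption
  assume a: "Phi \<subseteq> Dom ar L K" "\<forall>psi\<in>Psi. der Phi psi" "der Psi chi" show ?thesis using spec[OF spec[OF spec[OF h, of Phi], of Psi], of chi] a by blast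
qed
lemma cr5: "der Phi phi \<Longrightarrow> s \<in> Sig ar L \<Longrightarrow> der (app s ` Phi) (app s phi)"
proof -
  have h: "\<forall>Phi phi s. der Phi phi \<and> s \<in> Sig ar L \<longrightarrow> der (app s ` Phi) (app s phi)"
    using cr unfolding conseq_rel_def by (elim conjE) assumption
  assume a: "der Phi phi" "s \<in> Sig ar L" show ?thesis using spec[OF spec[OF spec[OF h, of Phi], of phi], of s] a by blast
qed

lemmas cr_parts = cr1 cr2 cr3 cr4 cr5

lemma gamma_D: "gamma der A \<subseteq> Dom ar L K"
  unfolding gamma_def using cr_parts(1) by blast
lemma gamma_incl: "A \<subseteq> Dom ar L K \<Longrightarrow> A \<subseteq> gamma der A"
  unfolding gamma_def using cr_parts(2) by blast
lemma gamma_mono: "A \<subseteq> B \<Longrightarrow> B \<subseteq> Dom ar L K \<Longrightarrow> gamma der A \<subseteq> gamma der B"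
  unfolding gamma_def using cr_parts(3) by blast
lemma gamma_cut: "A \<subseteq> Dom ar L K \<Longrightarrow> B \<subseteq> gamma der A \<Longrightarrow> gamma der B \<subseteq> gamma der A"
  unfolding gamma_def using cr_parts(4) by blast
lemma gamma_eq: "A \<subseteq> Dom ar L K \<Longrightarrow> A \<subseteq> B \<Longrightarrow> B \<subseteq> gamma der A \<Longrightarrow> gamma der B = gamma der A"
proof -
  assume A: "A \<subseteq> Dom ar L K" and AB: "A \<subseteq> B" and C: "B \<subseteq> gamma der A"
  have 1: "gamma der B \<subseteq> gamma der A" by (rule gamma_cut[OF A C])
  have "B \<subseteq> Dom ar L K" by (rule order_trans[OF C gamma_D])
  then have 2: "gamma der A \<subseteq> gamma der B" by (rule gamma_mono[OF AB])
  show ?thesis using 1 2 by (rule subset_antisym)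
qed
lemma gamma_idem: "A \<subseteq> Dom ar L K \<Longrightarrow> gamma der (gamma der A) = gamma der A"
proof -
  assume A: "A \<subseteq> Dom ar L K"
  show ?thesis by (rule gamma_eq[OF A gamma_incl[OF A] subset_refl])
qed
lemma sact_D: "a \<subseteq> Sig ar L \<Longrightarrow> A \<subseteq> Dom ar L K \<Longrightarrow> sact a A \<subseteq> Dom ar L K"
  unfolding sact_def using app_Dom by blast
lemma sact_gamma: assumes a: "a \<subseteq> Sig ar L" and B: "B \<subseteq> Dom ar L K"
  shows "gamma der (sact a (gamma der B)) = gamma der (sact a B)"
proof (rule gamma_eq)
  show "sact a B \<subseteq> Dom ar L K" using a B by (rule sact_D)
  show "sact a B \<subseteq> sact a (gamma der B)" by (rule sact_mono[OF gamma_incl[OF B]])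
  show "sact a (gamma der B) \<subseteq> gamma der (sact a B)"
  proof
    fix x assume "x \<in> sact a (gamma der B)"
    then obtain s d where x: "x = app s d" "s \<in> a" "der B d" unfolding sact_def gamma_def by blast
    have "der (app s ` B) (app s d)" using cr_parts(5) x a by blast
    moreover have "app s ` B \<subseteq> sact a B" using x unfolding sact_def by blast
    ultimately show "x \<in> gamma der (sact a B)"
      using cr_parts(3) \<open>sact a B \<subseteq> Dom ar L K\<close> x unfolding gamma_def by blast
  qed
qed

lemma ThJoin_Th: "Y \<subseteq> Th ar L K der \<Longrightarrow> ThJoin der Y \<in> Th ar L K der"
proof -
  assume "Y \<subseteq> Th ar L K der"
  then have "\<Union>Y \<subseteq> Dom ar L K" unfolding Th_def by blast
  then show ?thesis unfolding ThJoin_def Th_def using gamma_D[of "\<Union>Y"] gamma_idem[of "\<Union>Y"] by simp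
qed
lemma ThAct_Th: "a \<subseteq> Sig ar L \<Longrightarrow> T \<in> Th ar L K der \<Longrightarrow> ThAct der a T \<in> Th ar L K der"
proof -
  assume a: "a \<subseteq> Sig ar L" and T: "T \<in> Th ar L K der"
  then have "sact a T \<subseteq> Dom ar L K" using sact_D unfolding Th_def by blast
  then show ?thesis unfolding ThAct_def Th_def using gamma_D[of "sact a T"] gamma_idem[of "sact a T"] by simp
qed

definition HH where
  "HH X = gamma der (\<Union>p\<in>X. ThAct der (prS ar L (fst p)) (snd p))"

lemma HH_D: "HH X \<subseteq> Dom ar L K" unfolding HH_def by (rule gamma_D)

lemma HH_Union: "HH (\<Union>S) = gamma der (\<Union>X\<in>S. HH X)"
proof -
  let ?A = "\<Union>p\<in>\<Union>S. ThAct der (prS ar L (fst p)) (snd p)"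
  have AD: "?A \<subseteq> Dom ar L K"
  proof (rule UN_least)
    fix p show "ThAct der (prS ar L (fst p)) (snd p) \<subseteq> Dom ar L K" unfolding ThAct_def by (rule gamma_D)
  qed
  have "gamma der (\<Union>X\<in>S. HH X) = gamma der ?A"
  proof (rule gamma_eq[OF AD])
    show "?A \<subseteq> (\<Union>X\<in>S. HH X)"
    proof
      fix z assume "z \<in> ?A"
      then obtain X p where X: "X \<in> S" "p \<in> X" "z \<in> ThAct der (prS ar L (fst p)) (snd p)" by blast
      have "(\<Union>p\<in>X. ThAct der (prS ar L (fst p)) (snd p)) \<subseteq> Dom ar L K"
      proof (rule UN_least)
        fix p show "ThAct der (prS ar L (fst p)) (snd p) \<subseteq> Dom ar L K" unfolding ThAct_def by (rule gamma_D)
      qed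
      then have "(\<Union>p\<in>X. ThAct der (prS ar L (fst p)) (snd p)) \<subseteq> HH X"
        unfolding HH_def by (rule gamma_incl)
      moreover have "z \<in> (\<Union>p\<in>X. ThAct der (prS ar L (fst p)) (snd p))" using X by blast
      ultimately have "z \<in> HH X" by (rule subsetD)
      then show "z \<in> (\<Union>X\<in>S. HH X)" using X by blast
    qed
    show "(\<Union>X\<in>S. HH X) \<subseteq> gamma der ?A"
    proof (rule UN_least)
      fix X assume "X \<in> S"
      then have "(\<Union>p\<in>X. ThAct der (prS ar L (fst p)) (snd p)) \<subseteq> ?A" by blast
      then show "HH X \<subseteq> gamma der ?A" unfolding HH_def by (rule gamma_mono[OF _ AD])
    qed
  qed
  then show ?thesis unfolding HH_def by simp
qed

lemma HH_single: "T \<in> Th ar L K der \<Longrightarrow> HH {({Var}, T)} = T"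
proof -
  assume T: "T \<in> Th ar L K der"
  then have TD: "T \<subseteq> Dom ar L K" and gT: "gamma der T = T" unfolding Th_def by auto
  have "HH {({Var}, T)} = gamma der (gamma der T)"
    unfolding HH_def ThAct_def by (simp add: prS_Var sact_Var)
  also have "\<dots> = T" using gamma_idem[OF TD] gT by simp
  finally show ?thesis .
qed

abbreviation "UU \<equiv> TU ar L L1 K der"
abbreviation "GG \<equiv> TG ar L L1 K der"

lemma gamma_UN_gamma: "(\<And>i. i \<in> I \<Longrightarrow> F i \<subseteq> Dom ar L K) \<Longrightarrow>
   gamma der (\<Union>i\<in>I. gamma der (F i)) = gamma der (\<Union>i\<in>I. F i)"
proof (rule gamma_eq)
  assume F: "\<And>i. i \<in> I \<Longrightarrow> F i \<subseteq> Dom ar L K"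
  show "(\<Union>i\<in>I. F i) \<subseteq> Dom ar L K" using F by blast
  show "(\<Union>i\<in>I. F i) \<subseteq> (\<Union>i\<in>I. gamma der (F i))"
  proof (rule UN_mono)
    fix i assume "i \<in> I" then show "F i \<subseteq> gamma der (F i)" using F gamma_incl by simp
  qed simp
  show "(\<Union>i\<in>I. gamma der (F i)) \<subseteq> gamma der (\<Union>i\<in>I. F i)"
  proof (rule UN_least)
    fix i assume "i \<in> I"
    then have "F i \<subseteq> (\<Union>i\<in>I. F i)" by blast
    then show "gamma der (F i) \<subseteq> gamma der (\<Union>i\<in>I. F i)"
      by (rule gamma_mono[OF _ \<open>(\<Union>i\<in>I. F i) \<subseteq> Dom ar L K\<close>])
  qed
qed

lemma ThD: "y \<in> Th ar L K der \<Longrightarrow> y \<subseteq> Dom ar L K" by (simp add: Th_def)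

lemma HH_gen: "(A, B) \<in> GG \<Longrightarrow> HH A = HH B"
proof -
  assume "(A, B) \<in> GG"
  then consider
    (c1) X y where "A = {(\<Union>X, y)}" "B = (\<Union>x\<in>X. {(x, y)})" "y \<in> Th ar L K der"
  | (c2) x Y where "A = {(x, ThJoin der Y)}" "B = (\<Union>y\<in>Y. {(x, y)})" "Y \<subseteq> Th ar L K der"
  | (c3) x a y where "A = {(sprod x (iemb ar L1 a), y)}" "B = {(x, ThAct der a y)}"
         "a \<subseteq> Sig ar L" "y \<in> Th ar L K der"
    unfolding TG_def tgen_def by auto
  then show ?thesis
  proof cases
    case c1
    have sD: "\<And>x. sact (prS ar L x) y \<subseteq> Dom ar L K" using sact_D[OF prS_Sig ThD[OF c1(3)]] .
    have "HH A = gamma der (sact (prS ar L (\<Union>X)) y)"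
      unfolding HH_def c1 ThAct_def using sD by (simp add: gamma_idem)
    also have "\<dots> = gamma der (\<Union>x\<in>X. sact (prS ar L x) y)"
      by (simp add: prS_Union sact_Union_left)
    also have "\<dots> = HH B"
      unfolding HH_def c1 ThAct_def using gamma_UN_gamma[of X "\<lambda>x. sact (prS ar L x) y", OF sD]
      by simp
    finally show ?thesis .
  next
    case c2
    have YD: "\<Union>Y \<subseteq> Dom ar L K" using c2(3) ThD by blast
    have sD: "\<And>y. y \<in> Y \<Longrightarrow> sact (prS ar L x) y \<subseteq> Dom ar L K"
      using sact_D[OF prS_Sig] ThD c2(3) by blast
    have "HH A = gamma der (sact (prS ar L x) (gamma der (\<Union>Y)))"
      unfolding HH_def c2 ThAct_def ThJoin_def
      using sact_D[OF prS_Sig gamma_D] by (simp add: gamma_idem)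
    also have "\<dots> = gamma der (sact (prS ar L x) (\<Union>Y))"
      using sact_gamma[OF prS_Sig YD] .
    also have "\<dots> = gamma der (\<Union>y\<in>Y. sact (prS ar L x) y)"
      by (simp add: sact_Union_right)
    also have "\<dots> = HH B"
      unfolding HH_def c2 ThAct_def using gamma_UN_gamma[of Y "\<lambda>y. sact (prS ar L x) y", OF sD]
      by simp
    finally show ?thesis .
  next
    case c3
    have ia: "iemb ar L1 a = a" using iemb_id[OF exL c3(3)] .
    have yD: "y \<subseteq> Dom ar L K" using ThD c3(4) .
    have "HH A = gamma der (sact (prS ar L (sprod x a)) y)"
      unfolding HH_def c3 ia ThAct_def using sact_D[OF prS_Sig yD] by (simp add: gamma_idem)
    also have "\<dots> = gamma der (sact (prS ar L x) (sact a y))"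
      by (simp add: prS_sprod[OF c3(3)] sact_sact)
    also have "\<dots> = gamma der (sact (prS ar L x) (gamma der (sact a y)))"
      using sact_gamma[OF prS_Sig sact_D[OF c3(3) yD]] by simp
    also have "\<dots> = HH B"
      unfolding HH_def c3 ThAct_def using sact_D[OF prS_Sig gamma_D] by (simp add: gamma_idem)
    finally show ?thesis .
  qed
qed

lemma HH_tcong: "tcong U GG X Y \<Longrightarrow> HH X = HH Y"
proof (induction rule: tcong.induct)
  case (union P)
  have "HH (\<Union>(fst ` P)) = gamma der (\<Union>p\<in>P. HH (fst p))" by (simp add: HH_Union)
  also have "\<dots> = gamma der (\<Union>p\<in>P. HH (snd p))" using union by simp
  also have "\<dots> = HH (\<Union>(snd ` P))" by (simp add: HH_Union)
  finally show ?case .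
qed (auto simp: HH_gen)


lemma tcls_eq: "tcong U G X Y \<Longrightarrow> tcls U G X = tcls U G Y"
  unfolding tcls_def by (auto intro: tcong.trans tcong.sym)

lemma tcls_self: "X \<subseteq> U \<Longrightarrow> X \<in> tcls U G X"
  unfolding tcls_def by (auto intro: tcong.refl)

lemma gen_mem: "(A, B) \<in> GG \<Longrightarrow> tcong U GG A B"
  by (rule tcong.gen)

lemma Var_L1: "{Var} \<in> Pow (Sig ar L1)" using Var_Sig by blast

lemma single_U: "T \<in> Th ar L K der \<Longrightarrow> {({Var}, T)} \<subseteq> UU"
  unfolding TU_def using Var_Sig by blast

lemma SigL_L1: "a \<subseteq> Sig ar L \<Longrightarrow> a \<subseteq> Sig ar L1"
  using Sig_mono[OF exL] by blast

lemma gen1: "X \<subseteq> Pow (Sig ar L1) \<Longrightarrow> y \<in> Th ar L K der \<Longrightarrow>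
  ({(\<Union>X, y)}, (\<Union>x\<in>X. {(x, y)})) \<in> GG"
  unfolding TG_def tgen_def
  by (rule UnI1, rule UnI1, rule CollectI, rule exI[of _ X], rule exI[of _ y]) simp
lemma gen2: "x \<in> Pow (Sig ar L1) \<Longrightarrow> Y \<subseteq> Th ar L K der \<Longrightarrow>
  ({(x, ThJoin der Y)}, (\<Union>y\<in>Y. {(x, y)})) \<in> GG"
  unfolding TG_def tgen_def
  by (rule UnI1, rule UnI2, rule CollectI, rule exI[of _ x], rule exI[of _ Y]) simp
lemma gen3: "x \<in> Pow (Sig ar L1) \<Longrightarrow> b \<in> Pow (Sig ar L) \<Longrightarrow> y \<in> Th ar L K der \<Longrightarrow>
  ({(sprod x (iemb ar L1 b), y)}, {(x, ThAct der b y)}) \<in> GG"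
  unfolding TG_def tgen_def
  by (rule UnI2, rule CollectI, rule exI[of _ x], rule exI[of _ b], rule exI[of _ y]) simp

lemma act_tcong:
  assumes a: "a \<subseteq> Sig ar L"
  shows "tcong UU GG X Y \<Longrightarrow> tcong UU GG ((\<lambda>(x, y). (sprod a x, y)) ` X) ((\<lambda>(x, y). (sprod a x, y)) ` Y)"
proof (induction rule: tcong.induct)
  case (refl X)
  then show ?case unfolding TU_def using sprod_Sig[OF SigL_L1[OF a]]
    by (intro tcong.refl) auto
next
  case (gen A B)
  then consider
    (c1) X y where "A = {(\<Union>X, y)}" "B = (\<Union>x\<in>X. {(x, y)})" "X \<subseteq> Pow (Sig ar L1)" "y \<in> Th ar L K der"
  | (c2) x Y where "A = {(x, ThJoin der Y)}" "B = (\<Union>y\<in>Y. {(x, y)})" "x \<in> Pow (Sig ar L1)" "Y \<subseteq> Th ar L K der"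
  | (c3) x b y where "A = {(sprod x (iemb ar L1 b), y)}" "B = {(x, ThAct der b y)}"
         "x \<in> Pow (Sig ar L1)" "b \<subseteq> Sig ar L" "y \<in> Th ar L K der"
    unfolding TG_def tgen_def by auto
  then show ?case
  proof cases
    case c1
    have "({(\<Union>(sprod a ` X), y)}, (\<Union>x\<in>sprod a ` X. {(x, y)})) \<in> GG"
      using c1 sprod_Sig[OF SigL_L1[OF a]] by (intro gen1) auto
    moreover have "(\<lambda>(x, y). (sprod a x, y)) ` A = {(\<Union>(sprod a ` X), y)}"
      using c1 by (simp add: sprod_Union)
    moreover have "(\<lambda>(x, y). (sprod a x, y)) ` B = (\<Union>x\<in>sprod a ` X. {(x, y)})"
      using c1 by auto
    ultimately show ?thesis by (metis tcong.gen)
  next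
    case c2
    have "({(sprod a x, ThJoin der Y)}, (\<Union>y\<in>Y. {(sprod a x, y)})) \<in> GG"
      using c2 sprod_Sig[OF SigL_L1[OF a]] by (intro gen2) auto
    moreover have "(\<lambda>(x, y). (sprod a x, y)) ` B = (\<Union>y\<in>Y. {(sprod a x, y)})"
      using c2 by auto
    ultimately show ?thesis using c2 by (metis (no_types, lifting) case_prod_conv image_empty image_insert tcong.gen)
  next
    case c3
    have ib: "iemb ar L1 b = b" using iemb_id[OF exL c3(4)] .
    have "({(sprod (sprod a x) (iemb ar L1 b), y)}, {(sprod a x, ThAct der b y)}) \<in> GG"
      using c3 sprod_Sig[OF SigL_L1[OF a]] by (intro gen3) auto
    then show ?thesis using c3 by (simp add: ib sprod_assoc tcong.gen)
  qed
next
  case (sym X Y)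
  from sym.IH show ?case by (rule tcong.sym)
next
  case (trans X Y Z)
  from trans.IH show ?case by (rule tcong.trans)
next
  case (union P)
  let ?g = "\<lambda>(x, y). (sprod a x, y)"
  let ?P = "(\<lambda>p. (?g ` fst p, ?g ` snd p)) ` P"
  have "tcong UU GG (\<Union>(fst ` ?P)) (\<Union>(snd ` ?P))"
    using union by (intro tcong.union) auto
  moreover have "\<Union>(fst ` ?P) = ?g ` \<Union>(fst ` P)" "\<Union>(snd ` ?P) = ?g ` \<Union>(snd ` P)"
    by auto
  ultimately show ?case by simp
qed

definition ff where "ff T = tcls UU GG {({Var}, T)}"

lemma ff_join: assumes X: "X \<subseteq> Th ar L K der"
  shows "Tjoin ar L L1 K der (ff ` X) = ff (ThJoin der X)"
proof -
  let ?rep = "\<lambda>C. SOME Z. Z \<in> C"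
  have rep: "tcong UU GG {({Var}, T)} (?rep (ff T))" if "T \<in> X" for T
  proof -
    have "{({Var}, T)} \<in> ff T" unfolding ff_def using single_U X that tcls_self by blast
    then have "?rep (ff T) \<in> ff T" by (rule someI)
    then show ?thesis unfolding ff_def tcls_def by simp
  qed
  let ?P = "(\<lambda>T. ({({Var}, T)}, ?rep (ff T))) ` X"
  have pre: "\<forall>p\<in>?P. tcong UU GG (fst p) (snd p)" using rep by auto
  from tcong.union[OF pre] have u: "tcong UU GG (\<Union>T\<in>X. {({Var}, T)}) (\<Union>C\<in>ff ` X. ?rep C)"
    by (simp add: image_image)
  have "({({Var}, ThJoin der X)}, (\<Union>T\<in>X. {({Var}, T)})) \<in> GG"
    by (rule gen2[OF Var_L1 X])
  then have "tcong UU GG {({Var}, ThJoin der X)} (\<Union>C\<in>ff ` X. ?rep C)"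
    using u by (meson tcong.gen tcong.trans)
  then show ?thesis unfolding Tjoin_def tjoin_def ff_def using tcls_eq by metis
qed

lemma ff_act: assumes a: "a \<subseteq> Sig ar L" and T: "T \<in> Th ar L K der"
  shows "Tact_i ar L L1 K der a (ff T) = ff (ThAct der a T)"
proof -
  have ia: "iemb ar L1 a = a" using iemb_id[OF exL a] .
  let ?g = "\<lambda>(x, y). (sprod a x, y)"
  let ?R = "SOME Z. Z \<in> ff T"
  have "{({Var}, T)} \<in> ff T" unfolding ff_def using single_U T tcls_self by blast
  then have "?R \<in> ff T" by (rule someI)
  then have "tcong UU GG {({Var}, T)} ?R" unfolding ff_def tcls_def by simp
  then have "tcong UU GG (?g ` {({Var}, T)}) (?g ` ?R)" by (rule act_tcong[OF a])
  then have 1: "tcong UU GG {(a, T)} (?g ` ?R)" by (simp add: sprod_Var_right)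
  have "({(sprod {Var} (iemb ar L1 a), T)}, {({Var}, ThAct der a T)}) \<in> GG"
    using a T Var_L1 by (intro gen3) auto
  then have "tcong UU GG {(a, T)} {({Var}, ThAct der a T)}"
    by (simp add: ia sprod_Var_left tcong.gen)
  then have "tcong UU GG {({Var}, ThAct der a T)} (?g ` ?R)" using 1 by (meson tcong.sym tcong.trans)
  then show ?thesis unfolding Tact_i_def tact1_def ff_def ia using tcls_eq by metis
qed

lemma ff_inj: "inj_on ff (Th ar L K der)"
proof (rule inj_onI)
  fix S T assume S: "S \<in> Th ar L K der" and T: "T \<in> Th ar L K der" and e: "ff S = ff T"
  have "{({Var}, T)} \<in> ff T" unfolding ff_def using single_U T tcls_self by blast
  then have "{({Var}, T)} \<in> ff S" using e by simp
  then have "tcong UU GG {({Var}, S)} {({Var}, T)}" unfolding ff_def tcls_def by simp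
  then have "HH {({Var}, S)} = HH {({Var}, T)}" by (rule HH_tcong)
  then show "S = T" using HH_single S T by simp
qed

lemma ff_car: "T \<in> Th ar L K der \<Longrightarrow> ff T \<in> Tcar ar L L1 K der"
  unfolding Tcar_def tcarrier_def ff_def tcls_def
  using quotientI[of "{({Var}, T)}" "Pow UU" "{(X, Y). tcong UU GG X Y}"] single_U
  by (simp add: Image_def)

end

theorem theorem3p3:
  fixes ar :: "'c \<Rightarrow> nat" and L L1 :: "'c set" and K :: dkind
    and der :: "'c delt set \<Rightarrow> 'c delt \<Rightarrow> bool"
  assumes "expansion L L1"
    and "conseq_rel ar L K der"
  shows "iso_to_submodule (Pow (Sig ar L))
           (Th ar L K der) (ThJoin der) (ThAct der)
           (Tcar ar L L1 K der) (Tjoin ar L L1 K der) (Tact_i ar L L1 K der)"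
proof -
  have e: "L \<subseteq> L1" using assms(1) by (simp add: expansion_def)
  note c = assms(2)
  let ?f = "ff ar L L1 K der"
  let ?S = "?f ` Th ar L K der"
  have 1: "?S \<subseteq> Tcar ar L L1 K der" using ff_car[OF e c] by blast
  have 2: "\<forall>X\<subseteq>?S. Tjoin ar L L1 K der X \<in> ?S"
  proof (intro allI impI)
    fix X assume "X \<subseteq> ?S"
    then obtain Y where Y: "Y \<subseteq> Th ar L K der" "X = ?f ` Y" by (meson subset_image_iff)
    then show "Tjoin ar L L1 K der X \<in> ?S"
      using ff_join[OF e c Y(1)] ThJoin_Th[OF e c Y(1)] by simp
  qed
  have 3: "\<forall>a\<in>Pow (Sig ar L). \<forall>u\<in>?S. Tact_i ar L L1 K der a u \<in> ?S"
    using ff_act[OF e c] ThAct_Th[OF e c] by auto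
  have 4: "bij_betw ?f (Th ar L K der) ?S" using ff_inj[OF e c] by (simp add: bij_betw_def)
  have 5: "\<forall>X\<subseteq>Th ar L K der. ?f (ThJoin der X) = Tjoin ar L L1 K der (?f ` X)"
    using ff_join[OF e c] by simp
  have 6: "\<forall>a\<in>Pow (Sig ar L). \<forall>u\<in>Th ar L K der. ?f (ThAct der a u) = Tact_i ar L L1 K der a (?f u)"
    using ff_act[OF e c] by simp
  show ?thesis unfolding iso_to_submodule_def using 1 2 3 4 5 6 by blast
qed

end
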